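(* Let $\phi\in L^2(\mathbb R)$ have compact support and suppose $\{\phi(\cdot-k)\}_{k\in\mathbb Z}$ is a Riesz basis for its span with constants $d_1,d_2$. Let $M\in\mathbb N$, $M_1,M_2\in\mathbb Z$, let $\mathcal T=\operatorname{span}\{\sqrt M\phi(M\cdot-m):m=M_1,\dots,M_2\}$, and suppose $M,M_1,M_2$ are such that $\mathcal T\subseteq\mathcal H$. Then: 1. Given $\epsilon>0$ there exists $c_0=c_0(\epsilon)$ such that $E(\mathcal T,z)^2<1-\frac{d_1}{d_2}+\epsilon$ for $z\ge c_0M$. 2. If moreover $|\hat\phi(\omega)|\le c(1+|\omega|)^{-\alpha}$ for all $\omega\in\mathbb R$, for some constant $c$ and some $\alpha>\tfrac12$, then given $\epsilon>0$ there exists $c_0=c_0(\epsilon)$ such that $E(\mathcal T,z)^2<\epsilon$ for $z\ge c_0M$.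
   Context: $\mathcal H=\{f\in L^2(\mathbb R):\operatorname{supp}f\subseteq[0,1]\}$; $\hat f(\omega)=\int f(x)e^{-2\pi i\omega x}dx$; $\|g\|_J^2=\int_J|g|^2$. $E(\mathcal T,z)=\sup\{\|\hat f\|_{\mathbb R\setminus(-z,z)}:f\in\mathcal T,\|f\|=1\}$. Riesz basis with constants $d_1,d_2$: $d_1\sum|a_k|^2\le\|\sum a_k\phi(\cdot-k)\|^2\le d_2\sum|a_k|^2$ for all $(a_k)\in\ell^2(\mathbb Z)$. *)

theory Defs
  imports "HOL-Analysis.Analysis"
begin

definition l2sq_on :: "real set \<Rightarrow> (real \<Rightarrow> complex) \<Rightarrow> ennreal" where
  "l2sq_on J f = (\<integral>\<^sup>+ x. indicator J x * ennreal ((cmod (f x))\<^sup>2) \<partial>lborel)"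

abbreviation l2sq :: "(real \<Rightarrow> complex) \<Rightarrow> ennreal" where
  "l2sq f \<equiv> l2sq_on UNIV f"

definition fourier :: "(real \<Rightarrow> complex) \<Rightarrow> real \<Rightarrow> complex" where
  "fourier f w = (\<integral> x. f x * cis (- 2 * pi * w * x) \<partial>lborel)"

definition H :: "(real \<Rightarrow> complex) set" where
  "H = {f. f \<in> borel_measurable lborel \<and> l2sq f < \<infinity> \<and>
           (AE x in lborel. x \<notin> {0..1} \<longrightarrow> f x = 0)}"

text \<open>E(T,z) = sup { ||hat f||_{R \ (-z,z)} : f in T, ||f|| = 1 } (sup of the empty set read as 0).\<close>
definition E :: "(real \<Rightarrow> complex) set \<Rightarrow> real \<Rightarrow> real" where
  "E T z = Sup (insert 0 {sqrt (enn2real (l2sq_on (- {-z<..<z}) (fourier f))) | f. f \<in> T \<and> l2sq f = 1})"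

definition riesz_translates :: "(real \<Rightarrow> complex) \<Rightarrow> real \<Rightarrow> real \<Rightarrow> bool" where
  "riesz_translates \<phi> d1 d2 \<longleftrightarrow>
     (\<forall>a :: int \<Rightarrow> complex. (\<lambda>k. (cmod (a k))\<^sup>2) summable_on UNIV \<longrightarrow>
        ennreal (d1 * (\<Sum>\<^sub>\<infinity>k. (cmod (a k))\<^sup>2)) \<le> l2sq (\<lambda>x. \<Sum>\<^sub>\<infinity>k. a k * \<phi> (x - of_int k)) \<and>
        l2sq (\<lambda>x. \<Sum>\<^sub>\<infinity>k. a k * \<phi> (x - of_int k)) \<le> ennreal (d2 * (\<Sum>\<^sub>\<infinity>k. (cmod (a k))\<^sup>2)))"

definition Tspace :: "(real \<Rightarrow> complex) \<Rightarrow> nat \<Rightarrow> int \<Rightarrow> int \<Rightarrow> (real \<Rightarrow> complex) set" where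
  "Tspace \<phi> M M1 M2 = {f. \<exists>c :: int \<Rightarrow> complex.
      f = (\<lambda>x. \<Sum>m\<in>{M1..M2}. c m * complex_of_real (sqrt (real M)) * \<phi> (real M * x - of_int m))}"

end

theory Submission
  imports Defs
begin


lemma cis_int_has_integral:
  fixes n :: int and Tn :: nat and a :: real
  shows "((\<lambda>x. cis (2*pi* of_int n*x)) has_integral (if n = 0 then complex_of_real (real Tn) else 0)) {a..a + real Tn}"
proof (cases "n = 0")
  case True
  then show ?thesis using has_integral_const_real[of "1::complex" a "a + real Tn"] by (simp add: scaleR_conv_of_real)
next
  case False
  define K where "K = inverse (\<i> * of_real (2*pi* of_int n))"
  define F where "F x = cis (2*pi* of_int n*x) * K" for x
  have nz: "\<i> * complex_of_real (2*pi* of_int n) \<noteq> 0" using False by simp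
  have d: "(F has_vector_derivative cis (2*pi* of_int n*x)) (at x within {a..a + real Tn})" for x
  proof -
    have "((\<lambda>x. cis (2*pi* of_int n*x)) has_derivative (\<lambda>t. (2*pi* of_int n*t) *\<^sub>R (\<i> * cis (2*pi* of_int n*x)))) (at x within {a..a + real Tn})"
      by (intro has_derivative_cis derivative_eq_intros) auto
    then have "(F has_derivative (\<lambda>t. ((2*pi* of_int n*t) *\<^sub>R (\<i> * cis (2*pi* of_int n*x))) * K)) (at x within {a..a + real Tn})"
      unfolding F_def by (rule has_derivative_mult_left)
    then show ?thesis unfolding has_vector_derivative_def
      apply (rule has_derivative_eq_rhs) using nz by (auto simp: K_def fun_eq_iff scaleR_conv_of_real field_simps)
  qed
  have "F (a + real Tn) = F a"
  proof -
    have "cis (2*pi* of_int n*(a + real Tn)) = cis (2*pi* of_int n*a) * cis (2*pi* of_int (n * int Tn))"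
      by (simp add: cis_mult[symmetric] algebra_simps)
    also have "cis (2*pi* of_int (n * int Tn)) = 1" by (rule cis_multiple_2pi) simp
    finally show ?thesis by (simp add: F_def)
  qed
  moreover have "((\<lambda>x. cis (2*pi* of_int n*x)) has_integral (F (a + real Tn) - F a)) {a..a + real Tn}"
    by (rule fundamental_theorem_of_calculus) (auto intro: d)
  ultimately show ?thesis using False by simp
qed

lemma ortho:
  fixes J :: "int set" and b :: "int \<Rightarrow> complex" and w a :: real and Tn :: nat
  assumes J: "finite J"
  shows "(\<integral>\<^sup>+x. indicator {a..a + real Tn} x * ennreal ((cmod (\<Sum>j\<in>J. b j * cis (2*pi*(w + of_int j)*x)))\<^sup>2) \<partial>lborel)
      = ennreal (real Tn * (\<Sum>j\<in>J. (cmod (b j))\<^sup>2))"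
proof -
  define h where "h x = (\<Sum>j\<in>J. b j * cis (2*pi*(w + of_int j)*x))" for x
  have eq: "complex_of_real ((cmod (h x))\<^sup>2) = (\<Sum>j\<in>J. \<Sum>k\<in>J. b j * cnj (b k) * cis (2*pi* of_int (j-k) * x))" for x
  proof -
    have "complex_of_real ((cmod (h x))\<^sup>2) = h x * cnj (h x)" by (rule complex_norm_square)
    also have "\<dots> = (\<Sum>j\<in>J. \<Sum>k\<in>J. (b j * cis (2*pi*(w + of_int j)*x)) * (cnj (b k) * cis (-(2*pi*(w + of_int k)*x))))"
      unfolding h_def cnj_sum sum_product complex_cnj_mult cis_cnj by simp
    also have "\<dots> = (\<Sum>j\<in>J. \<Sum>k\<in>J. b j * cnj (b k) * cis (2*pi* of_int (j-k) * x))"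
      proof (intro sum.cong refl)
      fix j k assume "j \<in> J" "k \<in> J"
      have e: "2*pi*(w + of_int j)*x + -(2*pi*(w + of_int k)*x) = 2*pi* of_int (j-k) * x"
        by (simp add: field_simps)
      have "cis (2*pi*(w + of_int j)*x) * cis (-(2*pi*(w + of_int k)*x)) = cis (2*pi* of_int (j-k) * x)"
        by (simp only: cis_mult e)
      then show "(b j * cis (2*pi*(w + of_int j)*x)) * (cnj (b k) * cis (-(2*pi*(w + of_int k)*x))) = b j * cnj (b k) * cis (2*pi* of_int (j-k) * x)"
        by (simp add: mult_ac)
    qed
    finally show ?thesis .
  qed
  have HI: "((\<lambda>x. \<Sum>j\<in>J. \<Sum>k\<in>J. b j * cnj (b k) * cis (2*pi* of_int (j-k) * x)) has_integral
      (\<Sum>j\<in>J. \<Sum>k\<in>J. b j * cnj (b k) * (if j - k = 0 then complex_of_real (real Tn) else 0))) {a..a + real Tn}"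
    by (intro has_integral_sum J has_integral_mult_right cis_int_has_integral)
  have "(\<Sum>j\<in>J. \<Sum>k\<in>J. b j * cnj (b k) * (if j - k = 0 then complex_of_real (real Tn) else 0))
      = (\<Sum>j\<in>J. b j * cnj (b j) * complex_of_real (real Tn))"
  proof (intro sum.cong refl)
    fix j assume jJ: "j \<in> J"
    have "(\<Sum>k\<in>J. b j * cnj (b k) * (if j - k = 0 then complex_of_real (real Tn) else 0))
        = (\<Sum>k\<in>J. if k = j then b j * cnj (b k) * complex_of_real (real Tn) else 0)"
      by (intro sum.cong refl) auto
    also have "\<dots> = b j * cnj (b j) * complex_of_real (real Tn)" using jJ J by simp
    finally show "(\<Sum>k\<in>J. b j * cnj (b k) * (if j - k = 0 then complex_of_real (real Tn) else 0)) = b j * cnj (b j) * complex_of_real (real Tn)" .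
  qed
  also have "\<dots> = complex_of_real (real Tn * (\<Sum>j\<in>J. (cmod (b j))\<^sup>2))"
    using complex_norm_square[symmetric] by (simp add: sum_distrib_left sum_distrib_right mult.commute)
  finally have HIval: "(\<Sum>j\<in>J. \<Sum>k\<in>J. b j * cnj (b k) * (if j - k = 0 then complex_of_real (real Tn) else 0)) = complex_of_real (real Tn * (\<Sum>j\<in>J. (cmod (b j))\<^sup>2))" .
  have funeq: "(\<lambda>x. complex_of_real ((cmod (h x))\<^sup>2)) = (\<lambda>x. \<Sum>j\<in>J. \<Sum>k\<in>J. b j * cnj (b k) * cis (2*pi* of_int (j-k) * x))"
    using eq by (intro ext) blast
  have HI2: "((\<lambda>x. complex_of_real ((cmod (h x))\<^sup>2)) has_integral complex_of_real (real Tn * (\<Sum>j\<in>J. (cmod (b j))\<^sup>2))) {a..a + real Tn}"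
    unfolding funeq HIval[symmetric] by (rule HI)
  have "((Re \<circ> (\<lambda>x. complex_of_real ((cmod (h x))\<^sup>2))) has_integral Re (complex_of_real (real Tn * (\<Sum>j\<in>J. (cmod (b j))\<^sup>2)))) {a..a + real Tn}"
    by (rule has_integral_linear[OF HI2 bounded_linear_Re])
  then have HR: "((\<lambda>x. (cmod (h x))\<^sup>2) has_integral (real Tn * (\<Sum>j\<in>J. (cmod (b j))\<^sup>2))) {a..a + real Tn}"
    by (simp add: o_def)
  have "(\<integral>\<^sup>+x. ennreal (indicator {a..a + real Tn} x * (cmod (h x))\<^sup>2) \<partial>lborel) = ennreal (real Tn * (\<Sum>j\<in>J. (cmod (b j))\<^sup>2))"
    by (rule nn_integral_has_integral_lebesgue[OF _ HR]) simp
  moreover have "\<And>x. ennreal (indicator {a..a + real Tn} x * (cmod (h x))\<^sup>2) = indicator {a..a + real Tn} x * ennreal ((cmod (h x))\<^sup>2)"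
    by (simp split: split_indicator)
  ultimately show ?thesis by (simp add: h_def)
qed


lemma le_1_plus_sq: "(t::real) \<ge> 0 \<Longrightarrow> t \<le> 1 + t\<^sup>2"
proof -
  assume "t \<ge> 0"
  have "0 \<le> (t - 1)\<^sup>2" by simp
  then have "0 \<le> t\<^sup>2 + 1 - 2 * t" by (simp add: power2_diff)
  then show ?thesis using \<open>t \<ge> 0\<close> by linarith
qed

lemma l2_bounded_integrable:
  fixes g :: "real \<Rightarrow> complex"
  assumes meas: "g \<in> borel_measurable lborel" and L2: "l2sq g < \<infinity>"
    and supp: "\<And>x. x \<notin> {a..b} \<Longrightarrow> g x = 0"
  shows "integrable lborel g"
proof (rule integrableI_bounded[OF meas])
  have pt: "ennreal (norm (g x)) \<le> indicator {a..b} x + ennreal ((cmod (g x))\<^sup>2)" for x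
  proof (cases "x \<in> {a..b}")
    case True
    have "cmod (g x) \<le> 1 + (cmod (g x))\<^sup>2"
      by (rule le_1_plus_sq) simp
    then have "ennreal (cmod (g x)) \<le> ennreal (1 + (cmod (g x))\<^sup>2)" by (rule ennreal_leI)
    also have "\<dots> = 1 + ennreal ((cmod (g x))\<^sup>2)" by (subst ennreal_plus) auto
    finally show ?thesis using True by simp
  next
    case False then show ?thesis using supp[of x] by simp
  qed
  have "(\<integral>\<^sup>+ x. ennreal (norm (g x)) \<partial>lborel) \<le> (\<integral>\<^sup>+ x. indicator {a..b} x + ennreal ((cmod (g x))\<^sup>2) \<partial>lborel)"
    by (intro nn_integral_mono pt)
  also have "\<dots> = emeasure lborel {a..b} + l2sq g"
    using meas by (subst nn_integral_add) (auto simp: l2sq_on_def)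
  also have "\<dots> < \<infinity>" using L2 by (simp add: less_top emeasure_lborel_Icc_eq)
  finally show "(\<integral>\<^sup>+ x. ennreal (norm (g x)) \<partial>lborel) < \<infinity>" .
qed

lemma borel_measurable_cis [measurable]: "cis \<in> borel_measurable borel"
  by (intro borel_measurable_continuous_onI continuous_intros)

lemma integrable_mult_cis:
  fixes g :: "real \<Rightarrow> complex"
  assumes "integrable lborel g"
  shows "integrable lborel (\<lambda>x. g x * cis (c * x))"
proof (rule Bochner_Integration.integrable_bound[OF assms])
  show "(\<lambda>x. g x * cis (c * x)) \<in> borel_measurable lborel"
    using borel_measurable_integrable[OF assms] by measurable
  show "AE x in lborel. norm (g x * cis (c * x)) \<le> norm (g x)" by (intro AE_I2) (simp add: norm_mult)
qed

lemma amgm_T: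
  fixes T p q :: real
  assumes T: "T > 0"
  shows "p * q \<le> T/2 * p\<^sup>2 + 1/(2*T) * q\<^sup>2"
proof -
  have "0 \<le> (T*p - q)\<^sup>2" by simp
  then have "0 \<le> T\<^sup>2*p\<^sup>2 + q\<^sup>2 - 2*T*p*q" by (simp add: power2_diff power_mult_distrib mult_ac)
  then have "2*T*(p*q) \<le> 2*T*(T/2 * p\<^sup>2 + 1/(2*T) * q\<^sup>2)"
    using T by (simp add: algebra_simps power2_eq_square)
  then show ?thesis using T by simp
qed

lemma bessel:
  fixes g :: "real \<Rightarrow> complex" and J :: "int set" and Tn :: nat and a w :: real
  assumes meas: "g \<in> borel_measurable lborel" and L2: "l2sq g < \<infinity>"
    and supp: "\<And>x. x \<notin> {a..a + real Tn} \<Longrightarrow> g x = 0" and J: "finite J" and Tn: "Tn \<ge> 1"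
  shows "(\<Sum>j\<in>J. (cmod (fourier g (w + of_int j)))\<^sup>2) \<le> real Tn * enn2real (l2sq g)"
proof -
  define T where "T = real Tn"
  have Tpos: "T > 0" using Tn by (simp add: T_def)
  have int: "integrable lborel g" by (rule l2_bounded_integrable[OF meas L2 supp])
  define gh where "gh j = fourier g (w + of_int j)" for j
  define h where "h x = (\<Sum>j\<in>J. gh j * cis (2*pi*(w + of_int j)*x))" for x
  define S where "S = (\<Sum>j\<in>J. (cmod (gh j))\<^sup>2)"
  define G where "G = enn2real (l2sq g)"
  have S0: "S \<ge> 0" unfolding S_def by (intro sum_nonneg) simp
  have G0: "G \<ge> 0" unfolding G_def by simp
  have LG: "l2sq g = ennreal G" using L2 unfolding G_def by (simp add: less_top)
  have intj: "integrable lborel (\<lambda>x. g x * cis (- 2 * pi * (w + of_int j) * x))" for j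
    by (rule integrable_mult_cis[OF int])
  have ghdef: "gh j = (\<integral>x. g x * cis (- 2 * pi * (w + of_int j) * x) \<partial>lborel)" for j
    unfolding gh_def fourier_def by simp
  have cnjh: "cnj (h x) = (\<Sum>j\<in>J. cnj (gh j) * cis (- 2 * pi * (w + of_int j) * x))" for x
    unfolding h_def cnj_sum complex_cnj_mult cis_cnj by simp
  have hfun: "(\<lambda>x. g x * cnj (h x)) = (\<lambda>x. \<Sum>j\<in>J. cnj (gh j) * (g x * cis (- 2 * pi * (w + of_int j) * x)))"
    by (intro ext) (simp add: cnjh sum_distrib_left mult_ac)
  have intprod: "integrable lborel (\<lambda>x. g x * cnj (h x))"
    unfolding hfun by (intro Bochner_Integration.integrable_sum Bochner_Integration.integrable_mult_right intj)
  have Seq: "complex_of_real S = (\<integral>x. g x * cnj (h x) \<partial>lborel)"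
  proof -
    have "complex_of_real S = (\<Sum>j\<in>J. cnj (gh j) * gh j)"
      unfolding S_def of_real_sum complex_norm_square by (simp add: mult.commute)
    also have "\<dots> = (\<Sum>j\<in>J. \<integral>x. cnj (gh j) * (g x * cis (- 2 * pi * (w + of_int j) * x)) \<partial>lborel)"
    proof (intro sum.cong refl)
      fix j
      show "cnj (gh j) * gh j = (\<integral>x. cnj (gh j) * (g x * cis (- 2 * pi * (w + of_int j) * x)) \<partial>lborel)"
        by (subst integral_mult_right_zero) (simp only: ghdef[symmetric])
    qed
    also have "\<dots> = (\<integral>x. (\<Sum>j\<in>J. cnj (gh j) * (g x * cis (- 2 * pi * (w + of_int j) * x))) \<partial>lborel)"
      by (rule Bochner_Integration.integral_sum[symmetric]) (intro Bochner_Integration.integrable_mult_right intj)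
    also have "\<dots> = (\<integral>x. g x * cnj (h x) \<partial>lborel)" unfolding hfun ..
    finally show ?thesis .
  qed
  have B1: "ennreal S \<le> (\<integral>\<^sup>+x. ennreal (cmod (g x * cnj (h x))) \<partial>lborel)"
  proof -
    have "ennreal S = ennreal (cmod (complex_of_real S))" using S0 by simp
    also have "\<dots> \<le> (\<integral>\<^sup>+x. ennreal (cmod (g x * cnj (h x))) \<partial>lborel)"
      unfolding Seq by (rule integral_norm_bound_ennreal[OF intprod])
    finally show ?thesis .
  qed
  have pt: "ennreal (cmod (g x * cnj (h x))) \<le> ennreal (T/2 * (cmod (g x))\<^sup>2) + ennreal (1/(2*T) * (indicator {a..a+T} x * (cmod (h x))\<^sup>2))" for x
  proof (cases "x \<in> {a..a+T}")
    case True
    have "cmod (g x * cnj (h x)) \<le> T/2 * (cmod (g x))\<^sup>2 + 1/(2*T) * (indicator {a..a+T} x * (cmod (h x))\<^sup>2)"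
      using amgm_T[OF Tpos, of "cmod (g x)" "cmod (h x)"] True by (simp add: norm_mult)
    then have "ennreal (cmod (g x * cnj (h x))) \<le> ennreal (T/2 * (cmod (g x))\<^sup>2 + 1/(2*T) * (indicator {a..a+T} x * (cmod (h x))\<^sup>2))"
      by (rule ennreal_leI)
    also have "\<dots> = ennreal (T/2 * (cmod (g x))\<^sup>2) + ennreal (1/(2*T) * (indicator {a..a+T} x * (cmod (h x))\<^sup>2))"
      using Tpos by (intro ennreal_plus) auto
    finally show ?thesis .
  next
    case False
    then show ?thesis using supp[of x] by (simp add: T_def)
  qed
  have hmeas: "h \<in> borel_measurable lborel" unfolding h_def by measurable
  have "(\<integral>\<^sup>+x. ennreal (cmod (g x * cnj (h x))) \<partial>lborel) \<le>
      (\<integral>\<^sup>+x. ennreal (T/2 * (cmod (g x))\<^sup>2) + ennreal (1/(2*T) * (indicator {a..a+T} x * (cmod (h x))\<^sup>2)) \<partial>lborel)"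
    by (intro nn_integral_mono pt)
  also have "\<dots> = (\<integral>\<^sup>+x. ennreal (T/2 * (cmod (g x))\<^sup>2) \<partial>lborel) + (\<integral>\<^sup>+x. ennreal (1/(2*T) * (indicator {a..a+T} x * (cmod (h x))\<^sup>2)) \<partial>lborel)"
    using meas hmeas by (intro nn_integral_add) (simp_all add: measurable_lborel1)
  also have "(\<integral>\<^sup>+x. ennreal (T/2 * (cmod (g x))\<^sup>2) \<partial>lborel) = ennreal (T/2) * l2sq g"
  proof -
    have "(\<integral>\<^sup>+x. ennreal (T/2 * (cmod (g x))\<^sup>2) \<partial>lborel) = (\<integral>\<^sup>+x. ennreal (T/2) * ennreal ((cmod (g x))\<^sup>2) \<partial>lborel)"
      using Tpos by (intro nn_integral_cong ennreal_mult) auto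
    also have "\<dots> = ennreal (T/2) * l2sq g"
      using meas by (subst nn_integral_cmult) (auto simp: l2sq_on_def)
    finally show ?thesis .
  qed
  also have "(\<integral>\<^sup>+x. ennreal (1/(2*T) * (indicator {a..a+T} x * (cmod (h x))\<^sup>2)) \<partial>lborel) = ennreal (1/(2*T)) * ennreal (T * S)"
  proof -
    have "(\<integral>\<^sup>+x. ennreal (1/(2*T) * (indicator {a..a+T} x * (cmod (h x))\<^sup>2)) \<partial>lborel)
        = (\<integral>\<^sup>+x. ennreal (1/(2*T)) * (indicator {a..a+T} x * ennreal ((cmod (h x))\<^sup>2)) \<partial>lborel)"
      using Tpos by (intro nn_integral_cong) (auto split: split_indicator simp: ennreal_mult[symmetric] simp del: ennreal_mult)
    also have "\<dots> = ennreal (1/(2*T)) * (\<integral>\<^sup>+x. indicator {a..a+T} x * ennreal ((cmod (h x))\<^sup>2) \<partial>lborel)"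
      using hmeas by (subst nn_integral_cmult) auto
    also have "(\<integral>\<^sup>+x. indicator {a..a+T} x * ennreal ((cmod (h x))\<^sup>2) \<partial>lborel) = ennreal (T * S)"
      unfolding h_def S_def T_def by (rule ortho[OF J])
    finally show ?thesis .
  qed
  finally have "ennreal S \<le> ennreal (T/2) * ennreal G + ennreal (1/(2*T)) * ennreal (T * S)"
    using B1 LG by simp
  also have "\<dots> = ennreal (T/2 * G + S/2)"
    using Tpos S0 G0 by (simp add: ennreal_mult[symmetric] ennreal_plus[symmetric] del: ennreal_plus)
  finally have "S \<le> T/2 * G + S/2"
    using Tpos S0 G0 by (subst (asm) ennreal_le_iff) auto
  then have "S \<le> T * G" by simp
  then show ?thesis unfolding S_def gh_def T_def G_def .
qed

lemma norm_cis_minus_1: "cmod (cis t - 1) \<le> \<bar>t\<bar>"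
proof -
  have "(cmod (cis t - 1))\<^sup>2 = (cos t - 1)\<^sup>2 + (sin t)\<^sup>2"
    by (simp add: cmod_power2)
  also have "\<dots> = 2 - 2 * cos t" using sin_cos_squared_add[of t] by (simp add: power2_diff)
  also have "cos t = cos (2 * (t/2))" by simp
  also have "\<dots> = 1 - 2 * (sin (t/2))\<^sup>2" by (rule cos_double_sin)
  also have "2 - 2 * (1 - 2 * (sin (t/2))\<^sup>2) = 4 * (sin (t/2))\<^sup>2" by simp
  also have "\<dots> \<le> 4 * (t/2)\<^sup>2"
    using abs_sin_x_le_abs_x[of "t/2"] abs_le_square_iff[of "sin (t/2)" "t/2"] by simp
  also have "\<dots> = \<bar>t\<bar>\<^sup>2" by (simp add: power2_eq_square)
  finally show ?thesis by (rule power2_le_imp_le) simp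
qed


lemma tail_small:
  fixes f :: "int \<Rightarrow> real"
  assumes nn: "\<And>j. f j \<ge> 0" and bd: "\<And>F. finite F \<Longrightarrow> sum f F \<le> B" and e: "\<epsilon> > 0"
  shows "\<exists>K::nat. \<forall>F. finite F \<longrightarrow> (\<forall>j\<in>F. real K < \<bar>of_int j\<bar>) \<longrightarrow> sum f F \<le> \<epsilon>"
proof -
  define A where "A = sum f ` {F. finite F}"
  have ne: "A \<noteq> {}" unfolding A_def by auto
  have bda: "bdd_above A" unfolding A_def using bd by (auto intro!: bdd_aboveI)
  define s where "s = Sup A"
  have "s - \<epsilon> < s" using e by simp
  then obtain y where "y \<in> A" "s - \<epsilon> < y" using less_cSup_iff[OF ne bda] unfolding s_def by auto
  then obtain F0 where F0: "finite F0" "s - \<epsilon> < sum f F0" unfolding A_def by auto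
  define K where "K = nat (\<Sum>j\<in>F0. \<bar>j\<bar>)"
  have Kb: "\<bar>j\<bar> \<le> int K" if "j \<in> F0" for j
  proof -
    have "\<bar>j\<bar> \<le> (\<Sum>j\<in>F0. \<bar>j\<bar>)" using F0(1) that by (intro member_le_sum) auto
    then show ?thesis unfolding K_def by simp
  qed
  show ?thesis
  proof (intro exI allI impI)
    fix F :: "int set" assume F: "finite F" and tl: "\<forall>j\<in>F. real K < \<bar>of_int j\<bar>"
    have disj: "F \<inter> F0 = {}"
    proof (rule ccontr)
      assume "F \<inter> F0 \<noteq> {}"
      then obtain j where "j \<in> F" "j \<in> F0" by auto
      then have "real K < \<bar>of_int j\<bar>" "\<bar>j\<bar> \<le> int K" using tl Kb by auto
      then show False by linarith
    qed
    have "sum f F + sum f F0 = sum f (F \<union> F0)" using F F0(1) disj by (simp add: sum.union_disjoint)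
    also have "\<dots> \<le> s" unfolding s_def using F F0(1) by (intro cSup_upper bda) (auto simp: A_def)
    finally show "sum f F \<le> \<epsilon>" using F0(2) by linarith
  qed
qed

lemma fourier_diff:
  fixes g :: "real \<Rightarrow> complex"
  assumes int: "integrable lborel g"
  shows "fourier (\<lambda>x. g x * (cis (- 2 * pi * d * x) - 1)) w = fourier g (d + w) - fourier g w"
proof -
  have "fourier (\<lambda>x. g x * (cis (- 2 * pi * d * x) - 1)) w
      = (\<integral>x. g x * cis (- 2 * pi * (d + w) * x) - g x * cis (- 2 * pi * w * x) \<partial>lborel)"
    unfolding fourier_def
  proof (intro Bochner_Integration.integral_cong refl)
    fix x
    have "cis (- 2 * pi * d * x) * cis (- 2 * pi * w * x) = cis (- 2 * pi * (d + w) * x)"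
      by (simp add: cis_mult algebra_simps)
    then show "g x * (cis (- 2 * pi * d * x) - 1) * cis (- 2 * pi * w * x) =
       g x * cis (- 2 * pi * (d + w) * x) - g x * cis (- 2 * pi * w * x)"
      by (simp add: algebra_simps)
  qed
  also have "\<dots> = fourier g (d + w) - fourier g w"
    unfolding fourier_def
    by (rule Bochner_Integration.integral_diff) (rule integrable_mult_cis[OF int])+
  finally show ?thesis .
qed

lemma choose_N:
  fixes Q \<epsilon> :: real
  assumes Q: "Q \<ge> 0" and e: "\<epsilon> > 0"
  shows "\<exists>N::nat. N \<ge> 1 \<and> Q * (1 / real N)\<^sup>2 \<le> \<epsilon>"
proof -
  define N where "N = nat \<lceil>Q / \<epsilon>\<rceil> + 1"
  have N1: "N \<ge> 1" unfolding N_def by simp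
  have NQ: "Q / \<epsilon> \<le> real N" unfolding N_def by linarith
  then have "Q \<le> \<epsilon> * real N" using e by (simp add: field_simps)
  also have "\<dots> \<le> \<epsilon> * (real N)\<^sup>2" using N1 e by (intro mult_left_mono) (auto simp: power2_eq_square)
  finally have "Q \<le> \<epsilon> * (real N)\<^sup>2" .
  then have "Q * (1 / real N)\<^sup>2 \<le> \<epsilon>" using N1 by (simp add: field_simps power2_eq_square)
  then show ?thesis using N1 by blast
qed

lemma unif_tail:
  fixes \<phi> :: "real \<Rightarrow> complex" and a :: real and Tn :: nat
  assumes meas: "\<phi> \<in> borel_measurable lborel" and L2: "l2sq \<phi> < \<infinity>"
    and supp: "\<And>x. x \<notin> {a..a + real Tn} \<Longrightarrow> \<phi> x = 0" and Tn: "Tn \<ge> 1" and e: "\<epsilon> > 0"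
  shows "\<exists>R. \<forall>v J. finite J \<longrightarrow> (\<forall>j\<in>J. R \<le> \<bar>v + of_int j\<bar>) \<longrightarrow>
           (\<Sum>j\<in>J. (cmod (fourier \<phi> (v + of_int j)))\<^sup>2) \<le> \<epsilon>"
proof -
  define T where "T = real Tn"
  define G where "G = enn2real (l2sq \<phi>)"
  define X where "X = \<bar>a\<bar> + T"
  have T0: "T > 0" using Tn by (simp add: T_def)
  have G0: "G \<ge> 0" by (simp add: G_def)
  have X0: "X \<ge> 0" using T0 by (simp add: X_def)
  have LG: "l2sq \<phi> = ennreal G" using L2 unfolding G_def by (simp add: less_top)
  have bes: "(\<Sum>j\<in>J. (cmod (fourier \<phi> (v + of_int j)))\<^sup>2) \<le> T * G" if "finite J" for v J
    using bessel[OF meas L2 supp that Tn] unfolding T_def G_def by blast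
  have dif: "(\<Sum>j\<in>J. (cmod (fourier \<phi> (v + of_int j) - fourier \<phi> (v' + of_int j)))\<^sup>2) \<le> T * ((2*pi*\<bar>v - v'\<bar>*X)\<^sup>2 * G)"
    if J: "finite J" for v v' :: real and J
  proof -
    define d where "d = v - v'"
    define \<psi> where "\<psi> x = \<phi> x * (cis (- 2 * pi * d * x) - 1)" for x
    define C where "C = (2*pi*\<bar>d\<bar>*X)\<^sup>2"
    have C0: "C \<ge> 0" by (simp add: C_def)
    have psimeas: "\<psi> \<in> borel_measurable lborel" unfolding \<psi>_def using meas by (simp add: measurable_lborel1)
    have psisupp: "\<psi> x = 0" if "x \<notin> {a..a + real Tn}" for x using supp[OF that] by (simp add: \<psi>_def)
    have ptb: "(cmod (\<psi> x))\<^sup>2 \<le> C * (cmod (\<phi> x))\<^sup>2" for x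
    proof (cases "x \<in> {a..a+real Tn}")
      case True
      have xb: "\<bar>x\<bar> \<le> X" using True by (auto simp: X_def T_def)
      have "cmod (cis (- 2 * pi * d * x) - 1) \<le> \<bar>- 2 * pi * d * x\<bar>" by (rule norm_cis_minus_1)
      also have "\<dots> = 2*pi*\<bar>d\<bar>*\<bar>x\<bar>" by (simp add: abs_mult)
      also have "\<dots> \<le> 2*pi*\<bar>d\<bar>*X" using xb by (intro mult_left_mono) auto
      finally have cb: "cmod (cis (- 2 * pi * d * x) - 1) \<le> 2*pi*\<bar>d\<bar>*X" .
      have "cmod (\<psi> x) \<le> cmod (\<phi> x) * (2*pi*\<bar>d\<bar>*X)" unfolding \<psi>_def norm_mult
        by (intro mult_left_mono cb) simp
      then have "(cmod (\<psi> x))\<^sup>2 \<le> (cmod (\<phi> x) * (2*pi*\<bar>d\<bar>*X))\<^sup>2" by (intro power_mono) auto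
      then show ?thesis by (simp add: C_def power_mult_distrib mult.commute)
    next
      case False then show ?thesis using psisupp[of x] C0 by simp
    qed
    have l2b: "l2sq \<psi> \<le> ennreal (C * G)"
    proof -
      have "l2sq \<psi> = (\<integral>\<^sup>+x. ennreal ((cmod (\<psi> x))\<^sup>2) \<partial>lborel)" by (simp add: l2sq_on_def)
      also have "\<dots> \<le> (\<integral>\<^sup>+x. ennreal C * ennreal ((cmod (\<phi> x))\<^sup>2) \<partial>lborel)"
        by (intro nn_integral_mono) (subst ennreal_mult[symmetric], auto simp: C0 intro!: ennreal_leI ptb)
      also have "\<dots> = ennreal C * l2sq \<phi>" using meas by (subst nn_integral_cmult) (auto simp: l2sq_on_def)
      also have "\<dots> = ennreal (C * G)" using C0 G0 by (simp add: LG ennreal_mult)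
      finally show ?thesis .
    qed
    have psiL2: "l2sq \<psi> < \<infinity>" using le_less_trans[OF l2b] by simp
    have "(\<Sum>j\<in>J. (cmod (fourier \<psi> (v' + of_int j)))\<^sup>2) \<le> T * enn2real (l2sq \<psi>)"
      using bessel[OF psimeas psiL2 psisupp J Tn] unfolding T_def by blast
    also have "enn2real (l2sq \<psi>) \<le> C * G"
      using enn2real_mono[OF l2b] C0 G0 by simp
    finally have A: "(\<Sum>j\<in>J. (cmod (fourier \<psi> (v' + of_int j)))\<^sup>2) \<le> T * (C * G)" using T0 by simp
    have int: "integrable lborel \<phi>" by (rule l2_bounded_integrable[OF meas L2 supp])
    have "fourier \<psi> (v' + of_int j) = fourier \<phi> (v + of_int j) - fourier \<phi> (v' + of_int j)" for j
      unfolding \<psi>_def fourier_diff[OF int] by (simp add: d_def)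
    then show ?thesis using A by (simp add: C_def d_def)
  qed
  obtain N :: nat where N1: "N \<ge> 1" and NQ: "(T * (2*pi*X)\<^sup>2 * G) * (1 / real N)\<^sup>2 \<le> \<epsilon>/4"
    using choose_N[of "T * (2*pi*X)\<^sup>2 * G" "\<epsilon>/4"] T0 G0 e by auto
  have "\<forall>i\<in>{0..N}. \<exists>K::nat. \<forall>F. finite F \<longrightarrow> (\<forall>j\<in>F. real K < \<bar>of_int j\<bar>) \<longrightarrow>
      (\<Sum>j\<in>F. (cmod (fourier \<phi> (real i / real N + of_int j)))\<^sup>2) \<le> \<epsilon>/4"
  proof
    fix i assume "i \<in> {0..N}"
    show "\<exists>K::nat. \<forall>F. finite F \<longrightarrow> (\<forall>j\<in>F. real K < \<bar>of_int j\<bar>) \<longrightarrow>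
      (\<Sum>j\<in>F. (cmod (fourier \<phi> (real i / real N + of_int j)))\<^sup>2) \<le> \<epsilon>/4"
      by (rule tail_small[where B = "T * G"]) (auto intro: bes simp: e)
  qed
  then obtain Kf where Kf: "\<And>i F. i \<in> {0..N} \<Longrightarrow> finite F \<Longrightarrow> (\<forall>j\<in>F. real (Kf i) < \<bar>of_int j\<bar>) \<Longrightarrow>
      (\<Sum>j\<in>F. (cmod (fourier \<phi> (real i / real N + of_int j)))\<^sup>2) \<le> \<epsilon>/4"
    by metis
  define Km where "Km = Max (Kf ` {0..N})"
  have Kmb: "Kf i \<le> Km" if "i \<in> {0..N}" for i unfolding Km_def using that by (intro Max_ge) auto
  show ?thesis
  proof (intro exI allI impI)
    fix v :: real and J :: "int set"
    assume J: "finite J" and RJ: "\<forall>j\<in>J. real Km + 1 \<le> \<bar>v + of_int j\<bar>"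
    define n where "n = \<lfloor>v\<rfloor>"
    define v0 where "v0 = v - of_int n"
    have v0b: "0 \<le> v0" "v0 < 1" unfolding v0_def n_def by linarith+
    define J' where "J' = (\<lambda>j. j + n) ` J"
    have J'f: "finite J'" using J by (simp add: J'_def)
    have inj: "inj_on (\<lambda>j. j + n) J" by (simp add: inj_on_def)
    have eqsum: "(\<Sum>j\<in>J. (cmod (fourier \<phi> (v + of_int j)))\<^sup>2) = (\<Sum>j\<in>J'. (cmod (fourier \<phi> (v0 + of_int j)))\<^sup>2)"
      unfolding J'_def sum.reindex[OF inj] by (simp add: v0_def)
    have J'big: "real Km < \<bar>of_int j\<bar>" if "j \<in> J'" for j
    proof -
      obtain j0 where j0: "j0 \<in> J" "j = j0 + n" using \<open>j \<in> J'\<close> unfolding J'_def by auto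
      have "real Km + 1 \<le> \<bar>v0 + of_int j\<bar>" using RJ j0 by (simp add: v0_def)
      then show ?thesis using v0b by linarith
    qed
    define i where "i = nat \<lfloor>v0 * real N\<rfloor>"
    have iN: "i \<in> {0..N}"
    proof -
      have "v0 * real N < real N" using v0b N1 by simp
      then have "\<lfloor>v0 * real N\<rfloor> \<le> int N" by linarith
      then show ?thesis unfolding i_def by simp
    qed
    have ib: "\<bar>v0 - real i / real N\<bar> \<le> 1 / real N"
    proof -
      have fl: "real i = of_int \<lfloor>v0 * real N\<rfloor>" unfolding i_def using v0b N1 by simp
      have "real i \<le> v0 * real N" "v0 * real N < real i + 1" unfolding fl by linarith+
      moreover have "v0 - real i / real N = (v0 * real N - real i) / real N" using N1 by (simp add: field_simps)
      ultimately have "0 \<le> v0 - real i / real N" "v0 - real i / real N \<le> 1 / real N"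
        using N1 by (auto intro!: divide_nonneg_pos divide_right_mono)
      then show ?thesis by simp
    qed
    define f0 where "f0 j = cmod (fourier \<phi> (real i / real N + of_int j))" for j
    define f1 where "f1 j = cmod (fourier \<phi> (v0 + of_int j) - fourier \<phi> (real i / real N + of_int j))" for j
    have S1: "(\<Sum>j\<in>J'. (f0 j)\<^sup>2) \<le> \<epsilon>/4"
      unfolding f0_def using Kf[OF iN J'f] J'big Kmb[OF iN] by force
    have "(\<Sum>j\<in>J'. (f1 j)\<^sup>2) \<le> T * ((2*pi*\<bar>v0 - real i / real N\<bar>*X)\<^sup>2 * G)"
      unfolding f1_def by (rule dif[OF J'f])
    also have "\<dots> \<le> T * ((2*pi*(1 / real N)*X)\<^sup>2 * G)"
      using ib T0 G0 X0 by (intro mult_left_mono mult_right_mono power_mono) auto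
    also have "\<dots> = (T * (2*pi*X)\<^sup>2 * G) * (1 / real N)\<^sup>2" by (simp add: power2_eq_square field_simps)
    also have "\<dots> \<le> \<epsilon>/4" by (rule NQ)
    finally have S2: "(\<Sum>j\<in>J'. (f1 j)\<^sup>2) \<le> \<epsilon>/4" .
    have "L2_set (\<lambda>j. cmod (fourier \<phi> (v0 + of_int j))) J' \<le> L2_set (\<lambda>j. f0 j + f1 j) J'"
      unfolding f0_def f1_def by (intro L2_set_mono) (auto intro: norm_triangle_sub)
    also have "\<dots> \<le> L2_set f0 J' + L2_set f1 J'" by (rule L2_set_triangle_ineq)
    also have "\<dots> \<le> sqrt (\<epsilon>/4) + sqrt (\<epsilon>/4)"
      unfolding L2_set_def using S1 S2 by (intro add_mono real_sqrt_le_mono)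
    also have "\<dots> = sqrt \<epsilon>" by (simp add: real_sqrt_divide)
    finally have "sqrt (\<Sum>j\<in>J'. (cmod (fourier \<phi> (v0 + of_int j)))\<^sup>2) \<le> sqrt \<epsilon>"
      unfolding L2_set_def .
    then have "(\<Sum>j\<in>J'. (cmod (fourier \<phi> (v0 + of_int j)))\<^sup>2) \<le> \<epsilon>" by simp
    then show "(\<Sum>j\<in>J. (cmod (fourier \<phi> (v + of_int j)))\<^sup>2) \<le> \<epsilon>" unfolding eqsum .
  qed
qed



lemma fourier_single:
  fixes \<phi> :: "real \<Rightarrow> complex" and M :: nat and m :: int
  assumes int: "integrable lborel \<phi>" and M: "M \<ge> 1"
  shows "(\<integral>x. \<phi> (real M * x - of_int m) * cis (- 2 * pi * w * x) \<partial>lborel)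
     = complex_of_real (1 / real M) * cis (- 2 * pi * of_int m * (w / real M)) * fourier \<phi> (w / real M)"
proof -
  have M0: "real M > 0" using M by simp
  have "(\<integral>x. \<phi> (real M * x - of_int m) * cis (- 2 * pi * w * x) \<partial>lborel)
     = \<bar>1 / real M\<bar> *\<^sub>R (\<integral>x. \<phi> (real M * (of_int m / real M + (1 / real M) * x) - of_int m) * cis (- 2 * pi * w * (of_int m / real M + (1 / real M) * x)) \<partial>lborel)"
    by (rule lborel_integral_real_affine) (use M0 in simp)
  also have "(\<lambda>x. \<phi> (real M * (of_int m / real M + (1 / real M) * x) - of_int m) * cis (- 2 * pi * w * (of_int m / real M + (1 / real M) * x)))
      = (\<lambda>x. \<phi> x * cis (- 2 * pi * (w / real M) * x) * cis (- 2 * pi * of_int m * (w / real M)))"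
  proof
    fix x
    have a1: "real M * (of_int m / real M + (1 / real M) * x) - of_int m = x" using M0 by (simp add: field_simps)
    have a2: "cis (- 2 * pi * w * (of_int m / real M + (1 / real M) * x)) = cis (- 2 * pi * (w / real M) * x) * cis (- 2 * pi * of_int m * (w / real M))"
      unfolding cis_mult by (rule arg_cong[where f=cis]) (use M0 in \<open>simp add: field_simps\<close>)
    show "\<phi> (real M * (of_int m / real M + (1 / real M) * x) - of_int m) * cis (- 2 * pi * w * (of_int m / real M + (1 / real M) * x))
      = \<phi> x * cis (- 2 * pi * (w / real M) * x) * cis (- 2 * pi * of_int m * (w / real M))"
      unfolding a1 a2 by (simp add: mult.assoc)
  qed
  also have "(\<integral>x. \<phi> x * cis (- 2 * pi * (w / real M) * x) * cis (- 2 * pi * of_int m * (w / real M)) \<partial>lborel)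
      = fourier \<phi> (w / real M) * cis (- 2 * pi * of_int m * (w / real M))"
    unfolding fourier_def by (rule integral_mult_left_zero)
  finally show ?thesis using M0 by (simp add: scaleR_conv_of_real mult_ac)
qed

lemma fourier_T:
  fixes \<phi> :: "real \<Rightarrow> complex" and M :: nat and I :: "int set" and c :: "int \<Rightarrow> complex"
  assumes int: "integrable lborel \<phi>" and M: "M \<ge> 1"
  shows "fourier (\<lambda>x. \<Sum>m\<in>I. c m * complex_of_real (sqrt (real M)) * \<phi> (real M * x - of_int m)) w
    = complex_of_real (1 / sqrt (real M)) * fourier \<phi> (w / real M) * (\<Sum>m\<in>I. c m * cis (- 2 * pi * of_int m * (w / real M)))"
proof -
  have M0: "real M > 0" using M by simp
  have intm: "integrable lborel (\<lambda>x. \<phi> (real M * x - of_int m) * cis (- 2 * pi * w * x))" for m :: int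
  proof -
    have "integrable lborel (\<lambda>x. \<phi> (- of_int m + real M * x))"
      by (rule lborel_integrable_real_affine[OF int]) (use M0 in simp)
    then have "integrable lborel (\<lambda>x. \<phi> (real M * x - of_int m))" by (simp add: algebra_simps)
    then show ?thesis using integrable_mult_cis[of "\<lambda>x. \<phi> (real M * x - of_int m)" "- 2 * pi * w"] by simp
  qed
  have "fourier (\<lambda>x. \<Sum>m\<in>I. c m * complex_of_real (sqrt (real M)) * \<phi> (real M * x - of_int m)) w
      = (\<integral>x. (\<Sum>m\<in>I. (c m * complex_of_real (sqrt (real M))) * (\<phi> (real M * x - of_int m) * cis (- 2 * pi * w * x))) \<partial>lborel)"
    unfolding fourier_def sum_distrib_right by (intro Bochner_Integration.integral_cong refl sum.cong) (simp_all add: mult_ac)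
  also have "\<dots> = (\<Sum>m\<in>I. (c m * complex_of_real (sqrt (real M))) * (\<integral>x. \<phi> (real M * x - of_int m) * cis (- 2 * pi * w * x) \<partial>lborel))"
  proof -
    have intm2: "integrable lborel (\<lambda>x. k * (\<phi> (real M * x - of_int m) * cis (- 2 * pi * w * x)))" for k m
      by (rule Bochner_Integration.integrable_mult_right) (rule intm)
    show ?thesis by (simp only: Bochner_Integration.integral_sum[OF intm2] integral_mult_right_zero)
  qed
  also have "\<dots> = (\<Sum>m\<in>I. (c m * complex_of_real (sqrt (real M))) * (complex_of_real (1 / real M) * cis (- 2 * pi * of_int m * (w / real M)) * fourier \<phi> (w / real M)))"
    by (simp only: fourier_single[OF int M])
  also have "\<dots> = (\<Sum>m\<in>I. complex_of_real (1 / sqrt (real M)) * fourier \<phi> (w / real M) * (c m * cis (- 2 * pi * of_int m * (w / real M))))"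
  proof (intro sum.cong refl)
    fix m
    have s: "sqrt (real M) * sqrt (real M) = real M" using M0 by simp
    have "sqrt (real M) * (1 / real M) = 1 / sqrt (real M)"
      using s M0 by (simp add: field_simps)
    then have eq: "complex_of_real (sqrt (real M)) * complex_of_real (1 / real M) = complex_of_real (1 / sqrt (real M))"
      by (simp only: of_real_mult[symmetric])
    define cc where "cc = c m"
    define kk where "kk = cis (- 2 * pi * of_int m * (w / real M))"
    define ff where "ff = fourier \<phi> (w / real M)"
    have "(cc * complex_of_real (sqrt (real M))) * (complex_of_real (1 / real M) * kk * ff)
        = cc * kk * ff * (complex_of_real (sqrt (real M)) * complex_of_real (1 / real M))"
      by (simp only: mult_ac)
    also have "\<dots> = complex_of_real (1 / sqrt (real M)) * ff * (cc * kk)"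
      unfolding eq by (simp only: mult_ac)
    finally show "(c m * complex_of_real (sqrt (real M))) * (complex_of_real (1 / real M) * cis (- 2 * pi * of_int m * (w / real M)) * fourier \<phi> (w / real M))
      = complex_of_real (1 / sqrt (real M)) * fourier \<phi> (w / real M) * (c m * cis (- 2 * pi * of_int m * (w / real M)))"
      unfolding cc_def kk_def ff_def .
  qed
  also have "\<dots> = complex_of_real (1 / sqrt (real M)) * fourier \<phi> (w / real M) * (\<Sum>m\<in>I. c m * cis (- 2 * pi * of_int m * (w / real M)))"
    by (simp add: sum_distrib_left)
  finally show ?thesis .
qed

lemma fourier_measurable:
  fixes \<phi> :: "real \<Rightarrow> complex"
  assumes "\<phi> \<in> borel_measurable lborel"
  shows "fourier \<phi> \<in> borel_measurable borel"
proof -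
  have m: "\<phi> \<in> borel_measurable borel" using assms by (simp add: measurable_lborel1)
  have "(\<lambda>(w, x). \<phi> x * cis (- 2 * pi * w * x)) \<in> borel_measurable (borel \<Otimes>\<^sub>M lborel)"
    using m by measurable
  then have "(\<lambda>w. \<integral>x. \<phi> x * cis (- 2 * pi * w * x) \<partial>lborel) \<in> borel_measurable borel"
    by (rule lborel.borel_measurable_lebesgue_integral)
  then show ?thesis unfolding fourier_def[abs_def] .
qed

lemma int_decomp:
  fixes W :: "real \<Rightarrow> ennreal"
  assumes Wm: "W \<in> borel_measurable borel"
  shows "(\<integral>\<^sup>+u. W u \<partial>lborel) = (\<integral>\<^sup>+v. indicator {0..<1} v * (\<Sum>n. W (v + of_int (int_decode n))) \<partial>lborel)"
proof -
  define k where "k = int_decode"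
  define A where "A n = {real_of_int (k n) ..< real_of_int (k n) + 1}" for n
  have disj: "disjoint_family A"
    unfolding disjoint_family_on_def
  proof (intro ballI impI)
    fix n m :: nat assume "n \<noteq> m"
    then have "k n \<noteq> k m" unfolding k_def using inj_int_decode by (auto simp: inj_def)
    show "A n \<inter> A m = {}"
    proof (rule ccontr)
      assume "A n \<inter> A m \<noteq> {}"
      then obtain x where "x \<in> A n" "x \<in> A m" by auto
      then have "\<lfloor>x\<rfloor> = k n" "\<lfloor>x\<rfloor> = k m" unfolding A_def by (auto simp: floor_eq_iff)
      then show False using \<open>k n \<noteq> k m\<close> by simp
    qed
  qed
  have cover: "(\<Union>n. A n) = UNIV"
  proof -
    have "u \<in> (\<Union>n. A n)" for u
    proof -
      obtain n where "k n = \<lfloor>u\<rfloor>" unfolding k_def using surj_int_decode by (metis surjD)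
      then have "u \<in> A n" unfolding A_def by (simp add: floor_eq_iff[symmetric])
      then show ?thesis by auto
    qed
    then show ?thesis by auto
  qed
  have one: "(\<Sum>n. indicator (A n) u) = (1::ennreal)" for u
    using suminf_indicator[OF disj, of u] cover by simp
  have Am: "A n \<in> sets borel" for n unfolding A_def by simp
  have "(\<integral>\<^sup>+u. W u \<partial>lborel) = (\<integral>\<^sup>+u. (\<Sum>n. indicator (A n) u * W u) \<partial>lborel)"
    by (intro nn_integral_cong) (simp add: ennreal_suminf_multc one)
  also have "\<dots> = (\<Sum>n. \<integral>\<^sup>+u. indicator (A n) u * W u \<partial>lborel)"
    using Wm Am by (intro nn_integral_suminf) (simp add: measurable_lborel1)
  also have "\<dots> = (\<Sum>n. \<integral>\<^sup>+v. indicator {0..<1} v * W (v + of_int (k n)) \<partial>lborel)"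
  proof (intro suminf_cong)
    fix n
    have "(\<integral>\<^sup>+u. indicator (A n) u * W u \<partial>lborel) = ennreal \<bar>1\<bar> * (\<integral>\<^sup>+v. indicator (A n) (of_int (k n) + 1 * v) * W (of_int (k n) + 1 * v) \<partial>lborel)"
      using Wm Am by (intro nn_integral_real_affine) auto
    also have "\<dots> = (\<integral>\<^sup>+v. indicator {0..<1} v * W (v + of_int (k n)) \<partial>lborel)"
      by (simp add: A_def add.commute indicator_def)
    finally show "(\<integral>\<^sup>+u. indicator (A n) u * W u \<partial>lborel) = (\<integral>\<^sup>+v. indicator {0..<1} v * W (v + of_int (k n)) \<partial>lborel)" .
  qed
  also have "\<dots> = (\<integral>\<^sup>+v. (\<Sum>n. indicator {0..<1} v * W (v + of_int (k n))) \<partial>lborel)"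
    using Wm by (intro nn_integral_suminf[symmetric]) simp
  also have "\<dots> = (\<integral>\<^sup>+v. indicator {0..<1} v * (\<Sum>n. W (v + of_int (int_decode n))) \<partial>lborel)"
    by (simp add: ennreal_suminf_cmult k_def)
  finally show ?thesis .
qed

lemma P_ortho:
  fixes I :: "int set" and c :: "int \<Rightarrow> complex"
  assumes I: "finite I"
  shows "(\<integral>\<^sup>+v. indicator {0..1} v * ennreal ((cmod (\<Sum>m\<in>I. c m * cis (- 2 * pi * of_int m * v)))\<^sup>2) \<partial>lborel)
      = ennreal (\<Sum>m\<in>I. (cmod (c m))\<^sup>2)"
proof -
  have inj: "inj_on uminus I" by (simp add: inj_on_def)
  have eqP: "(\<Sum>m\<in>I. c m * cis (- 2 * pi * of_int m * v)) = (\<Sum>j\<in>uminus ` I. c (- j) * cis (2*pi*(0 + of_int j) * v))" for v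
    unfolding sum.reindex[OF inj] by (simp add: o_def)
  have eqS: "(\<Sum>m\<in>I. (cmod (c m))\<^sup>2) = (\<Sum>j\<in>uminus ` I. (cmod (c (- j)))\<^sup>2)"
    unfolding sum.reindex[OF inj] by (simp add: o_def)
  show ?thesis
    unfolding eqP eqS using ortho[where J="uminus ` I" and b="\<lambda>j. c (- j)" and w=0 and a=0 and Tn=1] I by simp
qed

lemma P_periodic:
  fixes I :: "int set" and c :: "int \<Rightarrow> complex" and j :: int
  shows "(\<Sum>m\<in>I. c m * cis (- 2 * pi * of_int m * (v + of_int j))) = (\<Sum>m\<in>I. c m * cis (- 2 * pi * of_int m * v))"
proof (intro sum.cong refl)
  fix m
  have "cis (- 2 * pi * of_int m * (v + of_int j)) = cis (- 2 * pi * of_int m * v) * cis (2 * pi * of_int (- (m * j)))"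
    unfolding cis_mult by (rule arg_cong[where f=cis]) (simp add: algebra_simps)
  also have "cis (2 * pi * of_int (- (m * j))) = 1" by (rule cis_multiple_2pi) simp
  finally show "c m * cis (- 2 * pi * of_int m * (v + of_int j)) = c m * cis (- 2 * pi * of_int m * v)" by simp
qed

lemma tail_integral:
  fixes \<phi> :: "real \<Rightarrow> complex" and I :: "int set" and c :: "int \<Rightarrow> complex"
  assumes unif: "\<forall>v J. finite J \<longrightarrow> (\<forall>j\<in>J. R \<le> \<bar>v + of_int j\<bar>) \<longrightarrow> (\<Sum>j\<in>J. (cmod (fourier \<phi> (v + of_int j)))\<^sup>2) \<le> e"
    and meas: "\<phi> \<in> borel_measurable lborel" and I: "finite I" and e0: "e \<ge> 0"
  shows "(\<integral>\<^sup>+u. indicator {u. R \<le> \<bar>u\<bar>} u * ennreal ((cmod (fourier \<phi> u))\<^sup>2 * (cmod (\<Sum>m\<in>I. c m * cis (- 2 * pi * of_int m * u)))\<^sup>2) \<partial>lborel)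
      \<le> ennreal (e * (\<Sum>m\<in>I. (cmod (c m))\<^sup>2))"
proof -
  define P where "P u = (\<Sum>m\<in>I. c m * cis (- 2 * pi * of_int m * u))" for u
  define W where "W u = indicator {u. R \<le> \<bar>u\<bar>} u * ennreal ((cmod (fourier \<phi> u))\<^sup>2 * (cmod (P u))\<^sup>2)" for u
  have fm: "fourier \<phi> \<in> borel_measurable borel" by (rule fourier_measurable[OF meas])
  have Wm: "W \<in> borel_measurable borel" unfolding W_def P_def using fm by measurable
  have Pper: "P (v + of_int j) = P v" for v j unfolding P_def by (rule P_periodic)
  have pt: "indicator {0..<1} v * (\<Sum>n. W (v + of_int (int_decode n))) \<le> indicator {0..1} v * ennreal (e * (cmod (P v))\<^sup>2)" for v
  proof (cases "v \<in> {0..<1}")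
    case False then show ?thesis by simp
  next
    case True
    have "(\<Sum>n. W (v + of_int (int_decode n))) \<le> ennreal (e * (cmod (P v))\<^sup>2)"
      unfolding suminf_eq_SUP
    proof (rule SUP_least)
      fix N
      define J where "J = int_decode ` {n\<in>{..<N}. R \<le> \<bar>v + of_int (int_decode n)\<bar>}"
      have inj: "inj_on int_decode {n\<in>{..<N}. R \<le> \<bar>v + of_int (int_decode n)\<bar>}"
        using inj_int_decode by (auto simp: inj_on_def inj_def)
      have Jf: "finite J" unfolding J_def by simp
      have JR: "\<forall>j\<in>J. R \<le> \<bar>v + of_int j\<bar>" unfolding J_def by auto
      have "(\<Sum>n<N. W (v + of_int (int_decode n)))
          = (\<Sum>n<N. ennreal ((if R \<le> \<bar>v + of_int (int_decode n)\<bar> then (cmod (fourier \<phi> (v + of_int (int_decode n))))\<^sup>2 else 0) * (cmod (P v))\<^sup>2))"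
        by (intro sum.cong refl) (simp add: W_def Pper)
      also have "\<dots> = ennreal (\<Sum>n<N. (if R \<le> \<bar>v + of_int (int_decode n)\<bar> then (cmod (fourier \<phi> (v + of_int (int_decode n))))\<^sup>2 else 0) * (cmod (P v))\<^sup>2)"
        by (rule sum_ennreal) simp
      also have "(\<Sum>n<N. (if R \<le> \<bar>v + of_int (int_decode n)\<bar> then (cmod (fourier \<phi> (v + of_int (int_decode n))))\<^sup>2 else 0) * (cmod (P v))\<^sup>2)
          = (\<Sum>j\<in>J. (cmod (fourier \<phi> (v + of_int j)))\<^sup>2) * (cmod (P v))\<^sup>2"
      proof -
        have "(\<Sum>n<N. (if R \<le> \<bar>v + of_int (int_decode n)\<bar> then (cmod (fourier \<phi> (v + of_int (int_decode n))))\<^sup>2 else 0))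
            = (\<Sum>n\<in>{n\<in>{..<N}. R \<le> \<bar>v + of_int (int_decode n)\<bar>}. (cmod (fourier \<phi> (v + of_int (int_decode n))))\<^sup>2)"
          by (rule sum.inter_filter[symmetric]) simp
        also have "\<dots> = (\<Sum>j\<in>J. (cmod (fourier \<phi> (v + of_int j)))\<^sup>2)"
          unfolding J_def sum.reindex[OF inj] by (simp add: o_def)
        finally have eqX: "(\<Sum>n<N. (if R \<le> \<bar>v + of_int (int_decode n)\<bar> then (cmod (fourier \<phi> (v + of_int (int_decode n))))\<^sup>2 else 0))
            = (\<Sum>j\<in>J. (cmod (fourier \<phi> (v + of_int j)))\<^sup>2)" .
        show ?thesis by (simp only: sum_distrib_right[symmetric] eqX)
      qed
      also have "\<dots> \<le> e * (cmod (P v))\<^sup>2"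
        using unif Jf JR by (intro mult_right_mono) auto
      finally show "(\<Sum>n<N. W (v + of_int (int_decode n))) \<le> ennreal (e * (cmod (P v))\<^sup>2)"
        by (rule order_trans) (auto intro: ennreal_leI)
    qed
    then show ?thesis using True by simp
  qed
  have "(\<integral>\<^sup>+u. W u \<partial>lborel) = (\<integral>\<^sup>+v. indicator {0..<1} v * (\<Sum>n. W (v + of_int (int_decode n))) \<partial>lborel)"
    by (rule int_decomp[OF Wm])
  also have "\<dots> \<le> (\<integral>\<^sup>+v. indicator {0..1} v * ennreal (e * (cmod (P v))\<^sup>2) \<partial>lborel)"
    by (intro nn_integral_mono pt)
  also have "\<dots> = (\<integral>\<^sup>+v. ennreal e * (indicator {0..1} v * ennreal ((cmod (P v))\<^sup>2)) \<partial>lborel)"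
    using e0 by (intro nn_integral_cong) (simp add: ennreal_mult mult_ac)
  also have "\<dots> = ennreal e * (\<integral>\<^sup>+v. indicator {0..1} v * ennreal ((cmod (P v))\<^sup>2) \<partial>lborel)"
    unfolding P_def by (rule nn_integral_cmult) measurable
  also have "\<dots> = ennreal e * ennreal (\<Sum>m\<in>I. (cmod (c m))\<^sup>2)"
    unfolding P_def using P_ortho[OF I] by simp
  also have "\<dots> = ennreal (e * (\<Sum>m\<in>I. (cmod (c m))\<^sup>2))"
    using e0 by (simp add: ennreal_mult sum_nonneg)
  finally show ?thesis unfolding W_def P_def .
qed



lemma riesz_lower:
  fixes \<phi> :: "real \<Rightarrow> complex" and I :: "int set" and c :: "int \<Rightarrow> complex" and M :: nat
  assumes riesz: "riesz_translates \<phi> d1 d2" and I: "finite I" and M: "M \<ge> 1"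
    and meas: "\<phi> \<in> borel_measurable lborel"
  shows "ennreal (d1 * (\<Sum>m\<in>I. (cmod (c m))\<^sup>2))
     \<le> l2sq (\<lambda>x. \<Sum>m\<in>I. c m * complex_of_real (sqrt (real M)) * \<phi> (real M * x - of_int m))"
proof -
  define a where "a k = (if k \<in> I then c k else 0)" for k
  define g0 where "g0 y = (\<Sum>m\<in>I. c m * \<phi> (y - of_int m))" for y
  have sa: "(\<lambda>k. (cmod (a k))\<^sup>2) summable_on UNIV"
    by (rule finite_nonzero_values_imp_summable_on) (rule finite_subset[OF _ I], auto simp: a_def split: if_splits)
  have ia: "(\<Sum>\<^sub>\<infinity>k. (cmod (a k))\<^sup>2) = (\<Sum>m\<in>I. (cmod (c m))\<^sup>2)"
  proof -
    have "(\<Sum>\<^sub>\<infinity>k. (cmod (a k))\<^sup>2) = (\<Sum>\<^sub>\<infinity>k\<in>I. (cmod (c k))\<^sup>2)"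
      by (rule infsum_cong_neutral) (auto simp: a_def)
    then show ?thesis using I by simp
  qed
  have ig: "(\<lambda>x. \<Sum>\<^sub>\<infinity>k. a k * \<phi> (x - of_int k)) = g0"
  proof
    fix x
    have "(\<Sum>\<^sub>\<infinity>k. a k * \<phi> (x - of_int k)) = (\<Sum>\<^sub>\<infinity>k\<in>I. c k * \<phi> (x - of_int k))"
      by (rule infsum_cong_neutral) (auto simp: a_def)
    then show "(\<Sum>\<^sub>\<infinity>k. a k * \<phi> (x - of_int k)) = g0 x" using I by (simp add: g0_def)
  qed
  have R: "ennreal (d1 * (\<Sum>m\<in>I. (cmod (c m))\<^sup>2)) \<le> l2sq g0"
  proof -
    have "ennreal (d1 * (\<Sum>\<^sub>\<infinity>k. (cmod (a k))\<^sup>2)) \<le> l2sq (\<lambda>x. \<Sum>\<^sub>\<infinity>k. a k * \<phi> (x - of_int k))"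
      using riesz[unfolded riesz_translates_def, rule_format, OF sa] by (rule conjunct1)
    then show ?thesis unfolding ia ig .
  qed
  have M0: "real M > 0" using M by simp
  have g0m: "g0 \<in> borel_measurable borel"
    unfolding g0_def using meas by (simp add: measurable_lborel1)
  have feq: "(\<lambda>x. \<Sum>m\<in>I. c m * complex_of_real (sqrt (real M)) * \<phi> (real M * x - of_int m))
      = (\<lambda>x. complex_of_real (sqrt (real M)) * g0 (real M * x))"
    by (intro ext) (simp add: g0_def sum_distrib_left mult_ac)
  have "l2sq g0 = (\<integral>\<^sup>+y. ennreal ((cmod (g0 y))\<^sup>2) \<partial>lborel)" by (simp add: l2sq_on_def)
  also have "\<dots> = ennreal \<bar>real M\<bar> * (\<integral>\<^sup>+x. ennreal ((cmod (g0 (0 + real M * x)))\<^sup>2) \<partial>lborel)"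
    using g0m M0 by (intro nn_integral_real_affine) auto
  also have "\<dots> = (\<integral>\<^sup>+x. ennreal (real M) * ennreal ((cmod (g0 (real M * x)))\<^sup>2) \<partial>lborel)"
    using g0m by (subst nn_integral_cmult) auto
  also have "\<dots> = l2sq (\<lambda>x. complex_of_real (sqrt (real M)) * g0 (real M * x))"
    unfolding l2sq_on_def
    by (intro nn_integral_cong) (simp add: norm_mult power_mult_distrib ennreal_mult)
  finally show ?thesis using R feq by simp
qed

lemma tail_f:
  fixes \<phi> :: "real \<Rightarrow> complex" and I :: "int set" and c :: "int \<Rightarrow> complex" and M :: nat
  assumes meas: "\<phi> \<in> borel_measurable lborel" and int: "integrable lborel \<phi>"
    and M: "M \<ge> 1" and I: "finite I"
    and unif: "\<forall>v J. finite J \<longrightarrow> (\<forall>j\<in>J. R \<le> \<bar>v + of_int j\<bar>) \<longrightarrow> (\<Sum>j\<in>J. (cmod (fourier \<phi> (v + of_int j)))\<^sup>2) \<le> e"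
    and e0: "e \<ge> 0" and z: "z \<ge> R * real M"
  shows "l2sq_on (- {-z<..<z}) (fourier (\<lambda>x. \<Sum>m\<in>I. c m * complex_of_real (sqrt (real M)) * \<phi> (real M * x - of_int m)))
      \<le> ennreal (e * (\<Sum>m\<in>I. (cmod (c m))\<^sup>2))"
proof -
  define f where "f x = (\<Sum>m\<in>I. c m * complex_of_real (sqrt (real M)) * \<phi> (real M * x - of_int m))" for x
  define P where "P u = (\<Sum>m\<in>I. c m * cis (- 2 * pi * of_int m * u))" for u
  have M0: "real M > 0" using M by simp
  have fm: "f \<in> borel_measurable lborel" unfolding f_def using meas by (simp add: measurable_lborel1)
  have ffm: "fourier f \<in> borel_measurable borel" by (rule fourier_measurable[OF fm])
  have fhat: "fourier f (real M * u) = complex_of_real (1 / sqrt (real M)) * fourier \<phi> u * P u" for u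
    unfolding f_def P_def fourier_T[OF int M] using M0 by simp
  have fhat2: "(cmod (fourier f (real M * u)))\<^sup>2 = (1 / real M) * ((cmod (fourier \<phi> u))\<^sup>2 * (cmod (P u))\<^sup>2)" for u
  proof -
    have k: "(cmod (complex_of_real (1 / sqrt (real M))))\<^sup>2 = 1 / real M"
      using M0 by (simp only: norm_of_real power2_abs) (simp add: power_divide)
    show ?thesis unfolding fhat norm_mult power_mult_distrib k by (simp add: mult_ac)
  qed
  have "l2sq_on (- {-z<..<z}) (fourier f) = (\<integral>\<^sup>+w. indicator (- {-z<..<z}) w * ennreal ((cmod (fourier f w))\<^sup>2) \<partial>lborel)"
    by (simp add: l2sq_on_def)
  also have "\<dots> = ennreal \<bar>real M\<bar> * (\<integral>\<^sup>+u. indicator (- {-z<..<z}) (0 + real M * u) * ennreal ((cmod (fourier f (0 + real M * u)))\<^sup>2) \<partial>lborel)"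
    using ffm M0 by (intro nn_integral_real_affine) auto
  also have "\<dots> = (\<integral>\<^sup>+u. ennreal (real M) * (indicator (- {-z<..<z}) (real M * u) * ennreal ((cmod (fourier f (real M * u)))\<^sup>2)) \<partial>lborel)"
    using ffm by (subst nn_integral_cmult) auto
  also have "\<dots> = (\<integral>\<^sup>+u. indicator (- {-z<..<z}) (real M * u) * ennreal ((cmod (fourier \<phi> u))\<^sup>2 * (cmod (P u))\<^sup>2) \<partial>lborel)"
  proof (intro nn_integral_cong)
    fix u
    have "ennreal (real M) * ennreal ((1 / real M) * ((cmod (fourier \<phi> u))\<^sup>2 * (cmod (P u))\<^sup>2))
        = ennreal ((cmod (fourier \<phi> u))\<^sup>2 * (cmod (P u))\<^sup>2)"
      using M0 by (simp add: ennreal_mult[symmetric] del: ennreal_mult)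
    note eqA = this
    show "ennreal (real M) * (indicator (- {-z<..<z}) (real M * u) * ennreal ((cmod (fourier f (real M * u)))\<^sup>2))
      = indicator (- {-z<..<z}) (real M * u) * ennreal ((cmod (fourier \<phi> u))\<^sup>2 * (cmod (P u))\<^sup>2)"
      unfolding fhat2 by (subst mult.left_commute) (simp only: eqA)
  qed
  also have "\<dots> \<le> (\<integral>\<^sup>+u. indicator {u. R \<le> \<bar>u\<bar>} u * ennreal ((cmod (fourier \<phi> u))\<^sup>2 * (cmod (P u))\<^sup>2) \<partial>lborel)"
  proof (intro nn_integral_mono)
    fix u
    have "R \<le> \<bar>u\<bar>" if "real M * u \<in> - {-z<..<z}"
    proof -
      have "real M * u \<le> -z \<or> z \<le> real M * u" using that by auto
      moreover have "real M * \<bar>u\<bar> = \<bar>real M * u\<bar>" using M0 by (simp add: abs_mult)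
      ultimately have "R * real M \<le> real M * \<bar>u\<bar>" using z by linarith
      then show ?thesis using M0 by (simp add: mult.commute)
    qed
    then show "indicator (- {-z<..<z}) (real M * u) * ennreal ((cmod (fourier \<phi> u))\<^sup>2 * (cmod (P u))\<^sup>2)
        \<le> indicator {u. R \<le> \<bar>u\<bar>} u * ennreal ((cmod (fourier \<phi> u))\<^sup>2 * (cmod (P u))\<^sup>2)"
      by (auto split: split_indicator)
  qed
  also have "\<dots> \<le> ennreal (e * (\<Sum>m\<in>I. (cmod (c m))\<^sup>2))"
    unfolding P_def by (rule tail_integral[OF unif meas I e0])
  finally show ?thesis unfolding f_def .
qed




theorem proposition5p10:
  fixes \<phi> :: "real \<Rightarrow> complex" and d1 d2 :: real
  assumes meas: "\<phi> \<in> borel_measurable lborel"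
    and L2: "l2sq \<phi> < \<infinity>"
    and compact_supp: "bounded {x. \<phi> x \<noteq> 0}"
    and d1_pos: "0 < d1"
    and riesz: "riesz_translates \<phi> d1 d2"
  shows "(\<forall>\<epsilon>>0. \<exists>c0. \<forall>(M::nat) (M1::int) (M2::int) (z::real).
            M \<ge> 1 \<longrightarrow> Tspace \<phi> M M1 M2 \<subseteq> H \<longrightarrow> z \<ge> c0 * real M \<longrightarrow>
            (E (Tspace \<phi> M M1 M2) z)\<^sup>2 < 1 - d1 / d2 + \<epsilon>) \<and>
         (\<forall>(c::real) (\<alpha>::real). \<alpha> > 1/2 \<and> (\<forall>\<omega>. cmod (fourier \<phi> \<omega>) \<le> c * (1 + \<bar>\<omega>\<bar>) powr (-\<alpha>)) \<longrightarrow>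
           (\<forall>\<epsilon>>0. \<exists>c0. \<forall>(M::nat) (M1::int) (M2::int) (z::real).
            M \<ge> 1 \<longrightarrow> Tspace \<phi> M M1 M2 \<subseteq> H \<longrightarrow> z \<ge> c0 * real M \<longrightarrow>
            (E (Tspace \<phi> M M1 M2) z)\<^sup>2 < \<epsilon>))"
proof -
  obtain B where B: "\<forall>x\<in>{x. \<phi> x \<noteq> 0}. norm x \<le> B" using compact_supp bounded_iff by blast
  define B' where "B' = max B 0"
  define a where "a = - B'"
  define Tn where "Tn = nat \<lceil>2 * B'\<rceil> + 1"
  have Tn: "Tn \<ge> 1" by (simp add: Tn_def)
  have TnB: "2 * B' \<le> real Tn" unfolding Tn_def by linarith
  have supp: "\<phi> x = 0" if "x \<notin> {a..a + real Tn}" for x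
  proof (rule ccontr)
    assume "\<phi> x \<noteq> 0"
    then have "\<bar>x\<bar> \<le> B" using B by auto
    then have "\<bar>x\<bar> \<le> B'" by (simp add: B'_def)
    then show False using that TnB by (auto simp: a_def)
  qed
  have int: "integrable lborel \<phi>" by (rule l2_bounded_integrable[OF meas L2 supp])
  have d12: "d1 \<le> d2"
  proof -
    define a0 where "a0 k = (if k = 0 then (1::complex) else 0)" for k :: int
    have sa: "(\<lambda>k. (cmod (a0 k))\<^sup>2) summable_on UNIV"
      by (rule finite_nonzero_values_imp_summable_on) (rule finite_subset[of _ "{0}"], auto simp: a0_def split: if_splits)
    have ia: "(\<Sum>\<^sub>\<infinity>k. (cmod (a0 k))\<^sup>2) = 1"
    proof -
      have "(\<Sum>\<^sub>\<infinity>k. (cmod (a0 k))\<^sup>2) = (\<Sum>\<^sub>\<infinity>k\<in>{0::int}. 1)"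
        by (rule infsum_cong_neutral) (auto simp: a0_def)
      then show ?thesis by simp
    qed
    have ig: "(\<lambda>x. \<Sum>\<^sub>\<infinity>k. a0 k * \<phi> (x - of_int k)) = \<phi>"
    proof
      fix x
      have "(\<Sum>\<^sub>\<infinity>k. a0 k * \<phi> (x - of_int k)) = (\<Sum>\<^sub>\<infinity>k\<in>{0::int}. \<phi> (x - of_int k))"
        by (rule infsum_cong_neutral) (auto simp: a0_def)
      then show "(\<Sum>\<^sub>\<infinity>k. a0 k * \<phi> (x - of_int k)) = \<phi> x" by simp
    qed
    have "ennreal (d1 * (\<Sum>\<^sub>\<infinity>k. (cmod (a0 k))\<^sup>2)) \<le> l2sq (\<lambda>x. \<Sum>\<^sub>\<infinity>k. a0 k * \<phi> (x - of_int k)) \<and>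
        l2sq (\<lambda>x. \<Sum>\<^sub>\<infinity>k. a0 k * \<phi> (x - of_int k)) \<le> ennreal (d2 * (\<Sum>\<^sub>\<infinity>k. (cmod (a0 k))\<^sup>2))"
      using riesz[unfolded riesz_translates_def, rule_format, OF sa] .
    then have "ennreal d1 \<le> ennreal d2" unfolding ia ig by auto
    then show ?thesis using d1_pos by (cases "d2 \<ge> 0") (auto simp: ennreal_le_iff ennreal_neg)
  qed
  have KEY: "\<forall>\<epsilon>>0. \<exists>c0. \<forall>(M::nat) (M1::int) (M2::int) (z::real).
            M \<ge> 1 \<longrightarrow> z \<ge> c0 * real M \<longrightarrow> (E (Tspace \<phi> M M1 M2) z)\<^sup>2 < \<epsilon>"
  proof (intro allI impI)
    fix \<epsilon> :: real assume e: "\<epsilon> > 0"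
    define e' where "e' = \<epsilon>/2 * d1"
    have e'0: "e' > 0" using e d1_pos by (simp add: e'_def)
    obtain R where unif: "\<forall>v J. finite J \<longrightarrow> (\<forall>j\<in>J. R \<le> \<bar>v + of_int j\<bar>) \<longrightarrow>
           (\<Sum>j\<in>J. (cmod (fourier \<phi> (v + of_int j)))\<^sup>2) \<le> e'"
      using unif_tail[OF meas L2 supp Tn e'0] by blast
    show "\<exists>c0. \<forall>(M::nat) (M1::int) (M2::int) (z::real).
            M \<ge> 1 \<longrightarrow> z \<ge> c0 * real M \<longrightarrow> (E (Tspace \<phi> M M1 M2) z)\<^sup>2 < \<epsilon>"
    proof (intro exI allI impI)
      fix M :: nat and M1 M2 :: int and z :: real
      assume M: "M \<ge> 1" and z: "z \<ge> R * real M"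
      define S where "S = {sqrt (enn2real (l2sq_on (- {-z<..<z}) (fourier f))) | f. f \<in> Tspace \<phi> M M1 M2 \<and> l2sq f = 1}"
      have bnd: "y \<le> sqrt (\<epsilon>/2)" if yS: "y \<in> insert 0 S" for y
      proof (cases "y = 0")
        case True then show ?thesis using e by simp
      next
        case False
        then obtain f where y: "y = sqrt (enn2real (l2sq_on (- {-z<..<z}) (fourier f)))"
          and fT: "f \<in> Tspace \<phi> M M1 M2" and f1: "l2sq f = 1"
          using yS False unfolding S_def by auto
        obtain c where fc: "f = (\<lambda>x. \<Sum>m\<in>{M1..M2}. c m * complex_of_real (sqrt (real M)) * \<phi> (real M * x - of_int m))"
          using fT unfolding Tspace_def by auto
        have L: "l2sq_on (- {-z<..<z}) (fourier f) \<le> ennreal (e' * (\<Sum>m\<in>{M1..M2}. (cmod (c m))\<^sup>2))"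
          unfolding fc by (rule tail_f[OF meas int M _ unif _ z]) (use e'0 in auto)
        have "ennreal (d1 * (\<Sum>m\<in>{M1..M2}. (cmod (c m))\<^sup>2)) \<le> l2sq f"
          unfolding fc by (rule riesz_lower[OF riesz _ M meas]) simp
        then have d1S: "d1 * (\<Sum>m\<in>{M1..M2}. (cmod (c m))\<^sup>2) \<le> 1" using f1 by (simp add: ennreal_le_1)
        have "e' * (\<Sum>m\<in>{M1..M2}. (cmod (c m))\<^sup>2) = \<epsilon>/2 * (d1 * (\<Sum>m\<in>{M1..M2}. (cmod (c m))\<^sup>2))"
          by (simp add: e'_def)
        also have "\<dots> \<le> \<epsilon>/2" using d1S e by (simp add: mult_left_le)
        finally have "l2sq_on (- {-z<..<z}) (fourier f) \<le> ennreal (\<epsilon>/2)"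
          using L by (meson ennreal_leI order_trans)
        note Lb = this
        have "enn2real (l2sq_on (- {-z<..<z}) (fourier f)) \<le> \<epsilon>/2"
          using enn2real_mono[OF Lb] e by simp
        then show ?thesis unfolding y by (rule real_sqrt_le_mono)
      qed
      have ne: "insert 0 S \<noteq> {}" by simp
      have bdd: "bdd_above (insert 0 S)" using bnd by (intro bdd_aboveI[where M="sqrt (\<epsilon>/2)"]) blast
      have Ele: "E (Tspace \<phi> M M1 M2) z \<le> sqrt (\<epsilon>/2)"
        unfolding E_def S_def[symmetric] by (rule cSup_least[OF ne]) (rule bnd)
      have Ege: "0 \<le> E (Tspace \<phi> M M1 M2) z"
        unfolding E_def S_def[symmetric] by (rule cSup_upper[OF _ bdd]) simp
      have "(E (Tspace \<phi> M M1 M2) z)\<^sup>2 \<le> (sqrt (\<epsilon>/2))\<^sup>2" using Ele Ege by (rule power_mono)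
      also have "\<dots> = \<epsilon>/2" using e by simp
      also have "\<dots> < \<epsilon>" using e by simp
      finally show "(E (Tspace \<phi> M M1 M2) z)\<^sup>2 < \<epsilon>" .
    qed
  qed
  have dd: "d1 / d2 \<le> 1" using d12 d1_pos by simp
  show ?thesis
  proof (intro conjI allI impI)
    fix \<epsilon> :: real assume e: "\<epsilon> > 0"
    obtain c0 where c0: "\<forall>(M::nat) (M1::int) (M2::int) (z::real).
            M \<ge> 1 \<longrightarrow> z \<ge> c0 * real M \<longrightarrow> (E (Tspace \<phi> M M1 M2) z)\<^sup>2 < \<epsilon>"
      using KEY e by blast
    show "\<exists>c0. \<forall>(M::nat) (M1::int) (M2::int) (z::real).
            M \<ge> 1 \<longrightarrow> Tspace \<phi> M M1 M2 \<subseteq> H \<longrightarrow> z \<ge> c0 * real M \<longrightarrow>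
            (E (Tspace \<phi> M M1 M2) z)\<^sup>2 < 1 - d1 / d2 + \<epsilon>"
    proof (intro exI[of _ c0] allI impI)
      fix M :: nat and M1 M2 :: int and z :: real
      assume "M \<ge> 1" "z \<ge> c0 * real M"
      then have "(E (Tspace \<phi> M M1 M2) z)\<^sup>2 < \<epsilon>" using c0 by blast
      then show "(E (Tspace \<phi> M M1 M2) z)\<^sup>2 < 1 - d1 / d2 + \<epsilon>" using dd by linarith
    qed
  next
    fix c \<alpha> \<epsilon> :: real assume e: "\<epsilon> > 0"
    obtain c0 where c0: "\<forall>(M::nat) (M1::int) (M2::int) (z::real).
            M \<ge> 1 \<longrightarrow> z \<ge> c0 * real M \<longrightarrow> (E (Tspace \<phi> M M1 M2) z)\<^sup>2 < \<epsilon>"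
      using KEY e by blast
    show "\<exists>c0. \<forall>(M::nat) (M1::int) (M2::int) (z::real).
            M \<ge> 1 \<longrightarrow> Tspace \<phi> M M1 M2 \<subseteq> H \<longrightarrow> z \<ge> c0 * real M \<longrightarrow>
            (E (Tspace \<phi> M M1 M2) z)\<^sup>2 < \<epsilon>"
      using c0 by blast
  qed
qed

end
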